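(* Let $\gamma\in\Gamma$ and let $C$, $C'$ be ordinary non-singular plane quartics defined over $k$ for which there exist $Q,Q'\in\mathcal{D}_\gamma$ and isomorphisms $\phi:C\to C_Q$, $\phi':C'\to C_{Q'}$ (defined over $\overline{k}$) with $\sigma\phi\circ\phi^{-1}=\gamma=\sigma\phi'\circ\phi'^{-1}$. Then the sets of bitangents $\mathcal{B}$ of $C$ and $\mathcal{B}'$ of $C'$ are $\mathrm{PGL}_3(k)$-equivalent, i.e. there is $\eta\in\mathrm{PGL}_3(k)$ with $\eta(\mathcal{B})=\mathcal{B}'$.
   Context: $k=\mathbb{F}_q$, $q$ a power of 2, $\overline{k}$ an algebraic closure, $\sigma(a)=a^q$ the Frobenius, acting coefficientwise on polynomials and maps. Isomorphisms between non-singular plane quartics are induced by elements of $\mathrm{PGL}_3(\overline{k})$. For $\gamma\in\mathrm{PGL}_3(\overline{k})$ with rows $\ell_1,\ell_2,\ell_3$ and homogeneous $F$, $F^\gamma=F(\ell_1,\ell_2,\ell_3)$. $\mathcal{Q}$ is the set of quadratic forms $Q=ax^2+by^2+cz^2+dxy+eyz+fzx$ over $\overline{k}$ with $abc\ne0$, $a+b+d\ne0$, $b+c+e\ne0$, $a+c+f\ne0$, $a+b+c+d+e+f\ne1$; $C_Q:Q^2=xyz(x+y+z)$. $\Gamma=\mathrm{PGL}_3(\mathbb{F}_2)$; for $\gamma\in\Gamma$ with rows $\ell_i$, $H_\gamma$ is defined by $\ell_1\ell_2\ell_3(\ell_1+\ell_2+\ell_3)=xyz(x+y+z)+H_\gamma^2$,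 $\gamma(Q)=Q^{\gamma^{-1}}+H_{\gamma^{-1}}$ (so $\gamma(C_Q)=C_{\gamma(Q)}$), and $\mathcal{D}_\gamma=\{Q\in\mathcal{Q}:\gamma(Q)=\sigma Q\}$. Ordinary means the Jacobian has 2-rank 3. *)

theory Defs
  imports "HOL-Analysis.Analysis" "HOL-Computational_Algebra.Polynomial"
begin

text \<open>Ternary forms over a field, represented by their coefficient functions:
  F i j l is the coefficient of x^i y^j z^l.\<close>
type_synonym 'a form = "nat \<Rightarrow> nat \<Rightarrow> nat \<Rightarrow> 'a"

definition homog :: "nat \<Rightarrow> 'a::zero form \<Rightarrow> bool" where
  "homog d F \<longleftrightarrow> (\<forall>i j l. F i j l \<noteq> 0 \<longrightarrow> i + j + l = d)"

definition monoms :: "nat \<Rightarrow> (nat \<times> nat \<times> nat) set" where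
  "monoms d = {(a, b, c). a \<le> d \<and> b \<le> d \<and> c \<le> d \<and> a + b + c = d}"

definition fadd :: "'a::plus form \<Rightarrow> 'a form \<Rightarrow> 'a form" where
  "fadd F G = (\<lambda>i j l. F i j l + G i j l)"

definition fscale :: "'a::times \<Rightarrow> 'a form \<Rightarrow> 'a form" where
  "fscale c F = (\<lambda>i j l. c * F i j l)"

definition fmul :: "'a::comm_semiring_1 form \<Rightarrow> 'a form \<Rightarrow> 'a form" where
  "fmul F G = (\<lambda>i j l. \<Sum>i1\<le>i. \<Sum>j1\<le>j. \<Sum>l1\<le>l.
                 F i1 j1 l1 * G (i - i1) (j - j1) (l - l1))"

definition fone :: "'a::comm_semiring_1 form" where
  "fone = (\<lambda>i j l. if i = 0 \<and> j = 0 \<and> l = 0 then 1 else 0)"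

definition fpow :: "'a::comm_semiring_1 form \<Rightarrow> nat \<Rightarrow> 'a form" where
  "fpow F n = ((fmul F) ^^ n) fone"

definition linform :: "'a::comm_semiring_1 ^ 3 \<Rightarrow> 'a form" where
  "linform w = (\<lambda>i j l. if (i, j, l) = (1, 0, 0) then w $ 1
                        else if (i, j, l) = (0, 1, 0) then w $ 2
                        else if (i, j, l) = (0, 0, 1) then w $ 3 else 0)"

definition fev :: "nat \<Rightarrow> 'a::comm_semiring_1 form \<Rightarrow> 'a ^ 3 \<Rightarrow> 'a" where
  "fev d F v = (\<Sum>(a, b, c)\<in>monoms d. F a b c * (v $ 1) ^ a * (v $ 2) ^ b * (v $ 3) ^ c)"

text \<open>F^gamma = F(l1, l2, l3), where l1, l2, l3 are the rows of the matrix M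
  (so fev (F^M) v = fev F (M *v v)); d is the degree of F.\<close>
definition fsubst :: "nat \<Rightarrow> 'a::comm_semiring_1 form \<Rightarrow> 'a ^ 3 ^ 3 \<Rightarrow> 'a form" where
  "fsubst d F M = (\<lambda>i j l. \<Sum>(a, b, c)\<in>monoms d.
      F a b c * fmul (fmul (fpow (linform (M $ 1)) a) (fpow (linform (M $ 2)) b))
                     (fpow (linform (M $ 3)) c) i j l)"

definition fdx :: "'a::comm_semiring_1 form \<Rightarrow> 'a form" where
  "fdx F = (\<lambda>i j l. of_nat (i + 1) * F (i + 1) j l)"
definition fdy :: "'a::comm_semiring_1 form \<Rightarrow> 'a form" where
  "fdy F = (\<lambda>i j l. of_nat (j + 1) * F i (j + 1) l)"
definition fdz :: "'a::comm_semiring_1 form \<Rightarrow> 'a form" where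
  "fdz F = (\<lambda>i j l. of_nat (l + 1) * F i j (l + 1))"

definition nonsingular_quartic :: "'a::comm_semiring_1 form \<Rightarrow> bool" where
  "nonsingular_quartic F \<longleftrightarrow> homog 4 F \<and> (\<exists>i j l. F i j l \<noteq> 0) \<and>
     \<not> (\<exists>v. v \<noteq> 0 \<and> fev 4 F v = 0 \<and> fev 3 (fdx F) v = 0 \<and>
              fev 3 (fdy F) v = 0 \<and> fev 3 (fdz F) v = 0)"

text \<open>Frobenius a \<mapsto> a^q and the field k = F_q inside the algebraic closure.\<close>
definition kfield :: "nat \<Rightarrow> 'a::comm_semiring_1 set" where
  "kfield q = {a. a ^ q = a}"

definition fsig :: "nat \<Rightarrow> 'a::comm_semiring_1 form \<Rightarrow> 'a form" where
  "fsig q F = (\<lambda>i j l. (F i j l) ^ q)"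

definition msig :: "nat \<Rightarrow> 'a::comm_semiring_1 ^ 3 ^ 3 \<Rightarrow> 'a ^ 3 ^ 3" where
  "msig q M = map_matrix (\<lambda>a. a ^ q) M"

definition smat :: "'a::times \<Rightarrow> 'a ^ 3 ^ 3 \<Rightarrow> 'a ^ 3 ^ 3" where
  "smat c M = (\<chi> i j. c * M $ i $ j)"

definition Xf :: "'a::comm_semiring_1 form" where "Xf = linform (vector [1, 0, 0])"
definition Yf :: "'a::comm_semiring_1 form" where "Yf = linform (vector [0, 1, 0])"
definition Zf :: "'a::comm_semiring_1 form" where "Zf = linform (vector [0, 0, 1])"

definition xyzw :: "'a::comm_semiring_1 form" where
  "xyzw = fmul (fmul (fmul Xf Yf) Zf) (fadd (fadd Xf Yf) Zf)"

text \<open>The curve C_Q : Q^2 = xyz(x+y+z), i.e. (characteristic 2) Q^2 + xyz(x+y+z) = 0.\<close>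
definition FQ :: "'a::comm_semiring_1 form \<Rightarrow> 'a form" where
  "FQ Q = fadd (fmul Q Q) xyzw"

definition Hform :: "'a::comm_semiring_1 ^ 3 ^ 3 \<Rightarrow> 'a form" where
  "Hform M = (THE H. homog 2 H \<and> fsubst 4 xyzw M = fadd xyzw (fmul H H))"

text \<open>Gamma = PGL_3(F_2) = GL_3(F_2): invertible 0/1 matrices.\<close>
definition Gamma :: "('a::comm_semiring_1 ^ 3 ^ 3) set" where
  "Gamma = {G. (\<forall>i j. G $ i $ j = 0 \<or> G $ i $ j = 1) \<and> invertible G}"

definition gact :: "'a::comm_semiring_1 ^ 3 ^ 3 \<Rightarrow> 'a form \<Rightarrow> 'a form" where
  "gact G Q = fadd (fsubst 2 Q (matrix_inv G)) (Hform (matrix_inv G))"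

definition Qset :: "'a::comm_ring_1 form set" where
  "Qset = {Q. homog 2 Q \<and>
     (let a = Q 2 0 0; b = Q 0 2 0; c = Q 0 0 2; d = Q 1 1 0; e = Q 0 1 1; f = Q 1 0 1 in
       a * b * c \<noteq> 0 \<and> a + b + d \<noteq> 0 \<and> b + c + e \<noteq> 0 \<and> a + c + f \<noteq> 0 \<and>
       a + b + c + d + e + f \<noteq> 1)}"

definition Dset :: "nat \<Rightarrow> 'a::comm_ring_1 ^ 3 ^ 3 \<Rightarrow> 'a form set" where
  "Dset q G = {Q \<in> Qset. gact G Q = fsig q Q}"

text \<open>An isomorphism C_F \<rightarrow> C_G induced by the invertible matrix M (points P \<mapsto> M P):
  F is, up to a nonzero scalar, G^M.\<close>
definition iso_by :: "'a::field form \<Rightarrow> 'a form \<Rightarrow> 'a ^ 3 ^ 3 \<Rightarrow> bool" where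
  "iso_by F G M \<longleftrightarrow> invertible M \<and> (\<exists>c. c \<noteq> 0 \<and> F = fscale c (fsubst 4 G M))"

definition lf :: "'a::comm_semiring_1 ^ 3 \<Rightarrow> 'a ^ 3 \<Rightarrow> 'a" where
  "lf w v = w $ 1 * v $ 1 + w $ 2 * v $ 2 + w $ 3 * v $ 3"

text \<open>The line {w . v = 0} is a bitangent of the quartic F = 0: the restriction of F to
  the line (parametrised by s p + t r) is a nonzero constant times the square of a
  nonzero binary quadratic form, i.e. the intersection divisor is 2D.\<close>
definition bitangent :: "'a::field form \<Rightarrow> 'a ^ 3 \<Rightarrow> bool" where
  "bitangent F w \<longleftrightarrow> (\<exists>p r. (\<forall>v. lf w v = 0 \<longleftrightarrow> (\<exists>s t. v = s *s p + t *s r)) \<and>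
      (\<exists>c g0 g1 g2. c \<noteq> 0 \<and> (g0 \<noteq> 0 \<or> g1 \<noteq> 0 \<or> g2 \<noteq> 0) \<and>
         (\<forall>s t. fev 4 F (s *s p + t *s r) = c * (g0 * s^2 + g1 * s * t + g2 * t^2)^2)))"

text \<open>The set of bitangents, each line given as its (affine cone) point set.\<close>
definition bitangents :: "'a::field form \<Rightarrow> ('a ^ 3) set set" where
  "bitangents F = {L. \<exists>w. w \<noteq> 0 \<and> L = {v. lf w v = 0} \<and> bitangent F w}"

end

theory Submission
  imports Defs
begin

definition cf :: "'a::comm_ring_1 poly poly poly \<Rightarrow> 'a form" where
  "cf P i j l = coeff (coeff (coeff P i) j) l"
definition tp :: "nat \<Rightarrow> 'a::comm_ring_1 form \<Rightarrow> 'a poly poly poly" where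
  "tp N F = (\<Sum>i\<le>N. \<Sum>j\<le>N. \<Sum>l\<le>N. monom (monom (monom (F i j l) l) j) i)"
definition E3 :: "'a::comm_ring_1 poly poly poly \<Rightarrow> 'a^3 \<Rightarrow> 'a" where
  "E3 P v = poly (poly (poly P [:[:v$1:]:]) [:v$2:]) (v$3)"
definition evb :: "nat \<Rightarrow> 'a::comm_ring_1 form \<Rightarrow> 'a^3 \<Rightarrow> 'a" where
  "evb N F v = (\<Sum>i\<le>N. \<Sum>j\<le>N. \<Sum>l\<le>N. F i j l * v$1^i * v$2^j * v$3^l)"
definition supp :: "nat \<Rightarrow> 'a::zero form \<Rightarrow> bool" where
  "supp N F \<longleftrightarrow> (\<forall>i j l. F i j l \<noteq> 0 \<longrightarrow> i \<le> N \<and> j \<le> N \<and> l \<le> N)"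

lemma sum_if_const: "(\<Sum>x\<in>A. if P then f x else 0) = (if P then sum f A else 0)"
  by auto

lemma cf_tp: "cf (tp N F) i j l = (if i\<le>N \<and> j\<le>N \<and> l\<le>N then F i j l else 0)"
proof -
  have 1: "coeff (tp N F) i = (if i \<le> N then (\<Sum>j\<le>N. \<Sum>l\<le>N. monom (monom (F i j l) l) j) else 0)"
    by (simp add: tp_def coeff_sum coeff_monom sum_if_const sum.delta)
  have 2: "coeff (\<Sum>j\<le>N. \<Sum>l\<le>N. monom (monom (F i j l) l) j) j = (if j \<le> N then (\<Sum>l\<le>N. monom (F i j l) l) else 0)"
    by (simp add: coeff_sum coeff_monom sum_if_const sum.delta)
  have 3: "coeff (\<Sum>l\<le>N. monom (F i j l) l) l = (if l \<le> N then F i j l else 0)"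
    by (simp add: coeff_sum coeff_monom sum_if_const sum.delta)
  show ?thesis unfolding cf_def 1 by (simp add: 2 3)
qed

lemma E3_tp: "E3 (tp N F) v = evb N F v"
  by (simp add: E3_def tp_def evb_def poly_sum poly_monom poly_power mult_ac)

lemma cf_mult: "cf (P*Q) = fmul (cf P) (cf Q)"
  by (simp add: fun_eq_iff cf_def fmul_def coeff_mult coeff_sum)

lemma cf_eq: "(\<And>i j l. cf P i j l = cf Q i j l) \<Longrightarrow> P = Q"
  unfolding cf_def by (intro poly_eqI) blast

lemma E3_mult: "E3 (P*Q) v = E3 P v * E3 Q v"
  by (simp add: E3_def)

lemma cf_tp_supp: "supp N F \<Longrightarrow> cf (tp N F) = F"
  by (auto simp: fun_eq_iff cf_tp supp_def)

lemma supp_tp_cf: "supp N (cf P) \<Longrightarrow> tp N (cf P) = P"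
  by (rule cf_eq) (auto simp: cf_tp supp_def)

lemma E3_evb: "supp N (cf P) \<Longrightarrow> E3 P v = evb N (cf P) v"
  by (metis supp_tp_cf E3_tp)

lemma homog_supp: "homog d F \<Longrightarrow> d \<le> N \<Longrightarrow> supp N F"
  unfolding homog_def supp_def by force

lemma fev_evb:
  assumes "homog d F" "d \<le> N"
  shows "fev d F v = evb N F v"
proof -
  have "evb N F v = (\<Sum>(i,j,l)\<in>{..N}\<times>{..N}\<times>{..N}. F i j l * v$1^i * v$2^j * v$3^l)"
    unfolding evb_def by (simp add: sum.cartesian_product)
  also have "\<dots> = (\<Sum>(i,j,l)\<in>monoms d. F i j l * v$1^i * v$2^j * v$3^l)"
  proof (intro sum.mono_neutral_right)
    show "monoms d \<subseteq> {..N}\<times>{..N}\<times>{..N}" using assms(2) unfolding monoms_def by auto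
    show "\<forall>x\<in>{..N}\<times>{..N}\<times>{..N} - monoms d. (case x of (i,j,l) \<Rightarrow> F i j l * v$1^i * v$2^j * v$3^l) = 0"
    proof
      fix x assume x: "x \<in> {..N}\<times>{..N}\<times>{..N} - monoms d"
      obtain i j l where xe: "x = (i,j,l)" by (cases x) auto
      have "F i j l = 0" using x assms(1) unfolding xe homog_def monoms_def by force
      then show "(case x of (i,j,l) \<Rightarrow> F i j l * v$1^i * v$2^j * v$3^l) = 0" by (simp add: xe)
    qed
  qed auto
  finally show ?thesis unfolding fev_def by simp
qed

lemma homog_fmul:
  assumes "homog m F" "homog n G"
  shows "homog (m+n) (fmul F G)"
  unfolding homog_def
proof (intro allI impI)
  fix i j l assume "fmul F G i j l \<noteq> 0"
  then obtain i1 j1 l1 where "i1 \<le> i" "j1 \<le> j" "l1 \<le> l"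
    "F i1 j1 l1 * G (i - i1) (j - j1) (l - l1) \<noteq> 0"
    unfolding fmul_def by (metis (no_types, lifting) atMost_iff sum.not_neutral_contains_not_neutral)
  moreover from this have "F i1 j1 l1 \<noteq> 0" "G (i - i1) (j - j1) (l - l1) \<noteq> 0" by auto
  moreover have "i1 + j1 + l1 = m" using assms(1) \<open>F i1 j1 l1 \<noteq> 0\<close> unfolding homog_def by blast
  moreover have "(i - i1) + (j - j1) + (l - l1) = n"
    using assms(2) \<open>G (i - i1) (j - j1) (l - l1) \<noteq> 0\<close> unfolding homog_def by blast
  ultimately show "i + j + l = m + n" by linarith
qed

lemma fev_fmul:
  fixes F G :: "'a::comm_ring_1 form"
  assumes "homog m F" "homog n G"
  shows "fev (m+n) (fmul F G) v = fev m F v * fev n G v"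
proof -
  let ?N = "m+n"
  have sF: "supp ?N F" "supp ?N G" using assms homog_supp le_add1 le_add2 by blast+
  have "fev m F v = E3 (tp ?N F) v" using assms by (simp add: E3_tp fev_evb)
  moreover have "fev n G v = E3 (tp ?N G) v" using assms by (simp add: E3_tp fev_evb)
  moreover have "cf (tp ?N F * tp ?N G) = fmul F G"
    using sF by (simp add: cf_mult cf_tp_supp)
  moreover have "supp ?N (fmul F G)" using homog_fmul[OF assms] homog_supp by auto
  ultimately show ?thesis using homog_fmul[OF assms]
    by (metis E3_evb E3_mult fev_evb order_refl)
qed

lemma monoms_alt: "monoms d = (\<Union>a\<in>{..d}. \<Union>b\<in>{..d-a}. {(a,b,d-a-b)})"
  unfolding monoms_def by auto

lemma monoms0: "monoms 0 = {(0,0,0)}" unfolding monoms_def by auto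
lemma monoms1: "monoms 1 = {(1,0,0),(0,1,0),(0,0,1)}" 
  by (simp add: monoms_alt atMost_Suc insert_commute)
lemma monoms2: "monoms 2 = {(2,0,0),(0,2,0),(0,0,2),(1,1,0),(0,1,1),(1,0,1)}"
  by (simp add: monoms_alt atMost_Suc numeral_eq_Suc) auto
lemma monoms3: "monoms 3 = {(3,0,0),(0,3,0),(0,0,3),(2,1,0),(2,0,1),(1,2,0),(0,2,1),(1,0,2),(0,1,2),(1,1,1)}"
  by (simp add: monoms_alt atMost_Suc numeral_eq_Suc) auto
lemma monoms4: "monoms 4 = {(4,0,0),(0,4,0),(0,0,4),(3,1,0),(3,0,1),(1,3,0),(0,3,1),(1,0,3),(0,1,3),
   (2,2,0),(2,0,2),(0,2,2),(2,1,1),(1,2,1),(1,1,2)}"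
  by (simp add: monoms_alt atMost_Suc numeral_eq_Suc) auto

lemma finite_monoms: "finite (monoms d)"
  unfolding monoms_alt by auto

lemma fev_fadd: "fev d (fadd F G) v = fev d F v + fev d G v"
  unfolding fev_def fadd_def by (simp add: split_def algebra_simps sum.distrib)

lemma fev_fscale: "fev d (fscale c F) v = c * fev d F v"
  unfolding fev_def fscale_def by (simp add: split_def algebra_simps sum_distrib_left)

lemma fev_sumform:
  "fev d (\<lambda>i j l. \<Sum>k\<in>S. c k * P k i j l) v = (\<Sum>k\<in>S. c k * fev d (P k) v)"
  unfolding fev_def by (simp add: split_def sum_distrib_left sum_distrib_right mult_ac sum.swap[of _ S])

lemma homog_linform: "homog 1 (linform w)"
  unfolding homog_def linform_def by auto

lemma fev_linform: "fev 1 (linform w) v = lf w v"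
  unfolding fev_def linform_def lf_def monoms1 by (simp add: add.assoc)

lemma homog_fone: "homog 0 fone" unfolding homog_def fone_def by auto
lemma fev_fone: "fev 0 fone v = 1" unfolding fev_def fone_def monoms0 by simp

lemma fpow_linform:
  fixes w :: "'a::comm_ring_1^3"
  shows "homog a (fpow (linform w) a) \<and> fev a (fpow (linform w) a) v = lf w v ^ a"
proof (induction a)
  case 0 then show ?case by (simp add: fpow_def homog_fone fev_fone)
next
  case (Suc a)
  have e: "fpow (linform w) (Suc a) = fmul (linform w) (fpow (linform w) a)"
    by (simp add: fpow_def)
  show ?case unfolding e using homog_fmul[OF homog_linform[of w], where G="fpow (linform w) a" and n=a]
    fev_fmul[OF homog_linform[of w], where G="fpow (linform w) a" and n=a and v=v] Suc
    by (simp add: fev_linform[simplified])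
qed

lemma lf_row: "lf (M $ i) v = (M *v v) $ i"
  by (simp add: lf_def matrix_vector_mult_def sum_3)

lemma fev_fsubst:
  fixes H :: "'a::comm_ring_1 form"
  shows "fev 4 (fsubst 4 H M) v = fev 4 H (M *v v)"
proof -
  have "fev 4 (fsubst 4 H M) v = (\<Sum>(a,b,c)\<in>monoms 4. H a b c *
     fev 4 (fmul (fmul (fpow (linform (M $ 1)) a) (fpow (linform (M $ 2)) b)) (fpow (linform (M $ 3)) c)) v)"
    unfolding fsubst_def using fev_sumform[where d=4 and c="\<lambda>(a,b,c). H a b c" and S="monoms 4" and
      P="\<lambda>(a,b,c). fmul (fmul (fpow (linform (M $ 1)) a) (fpow (linform (M $ 2)) b)) (fpow (linform (M $ 3)) c)" and v=v]
    by (simp add: split_def)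
  also have "\<dots> = (\<Sum>(a,b,c)\<in>monoms 4. H a b c * (M *v v)$1 ^ a * (M *v v)$2 ^ b * (M *v v)$3 ^ c)"
  proof (intro sum.cong refl)
    fix x assume "x \<in> monoms 4"
    then obtain a b c where x: "x = (a,b,c)" "a + b + c = 4" unfolding monoms_def by auto
    have "fev (a+b+c) (fmul (fmul (fpow (linform (M $ 1)) a) (fpow (linform (M $ 2)) b)) (fpow (linform (M $ 3)) c)) v
      = lf (M$1) v ^ a * lf (M$2) v ^ b * lf (M$3) v ^ c"
      using fpow_linform[of a "M$1" v] fpow_linform[of b "M$2" v] fpow_linform[of c "M$3" v]
      by (simp add: fev_fmul homog_fmul)
    then show "(case x of (a,b,c) \<Rightarrow> H a b c *
     fev 4 (fmul (fmul (fpow (linform (M $ 1)) a) (fpow (linform (M $ 2)) b)) (fpow (linform (M $ 3)) c)) v) =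
      (case x of (a,b,c) \<Rightarrow> H a b c * (M *v v)$1 ^ a * (M *v v)$2 ^ b * (M *v v)$3 ^ c)"
      using x by (simp add: lf_row mult_ac)
  qed
  finally show ?thesis unfolding fev_def by simp
qed

definition lp :: "nat \<Rightarrow> 'a::comm_ring_1 form \<Rightarrow> 'a^3 \<Rightarrow> 'a^3 \<Rightarrow> 'a poly" where
  "lp d F v u = (\<Sum>(a,b,c)\<in>monoms d. smult (F a b c) ([:v$1,u$1:]^a * [:v$2,u$2:]^b * [:v$3,u$3:]^c))"

lemma poly_lp: "poly (lp d F v u) t = fev d F (v + t *s u)"
  unfolding lp_def fev_def by (simp add: poly_sum split_def mult_ac)

lemma coeff_lin_pow0: "coeff ([:x,y:]^a) 0 = x^a"
  by (induction a) auto

lemma coeff_lin_pow1: "coeff ([:x::'a::comm_ring_1,y:]^a) 1 = of_nat a * x^(a-1) * y"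
proof (induction a)
  case 0 then show ?case by simp
next
  case (Suc a)
  have "coeff ([:x,y:]^Suc a) 1 = x * coeff ([:x,y:]^a) 1 + y * coeff ([:x,y:]^a) 0"
    by (simp add: coeff_pCons split: nat.split)
  also have "\<dots> = of_nat (Suc a) * x^a * y" using Suc by (cases a) (auto simp: coeff_lin_pow0 algebra_simps)
  finally show ?case by simp
qed

lemma coeff_mult1: "coeff (p * q) 1 = coeff p 0 * coeff q 1 + coeff p 1 * coeff q 0"
  by (simp add: coeff_mult atMost_Suc add.commute)

lemma coeff_mult0: "coeff (p * q) 0 = coeff p 0 * coeff q 0"
  by (simp add: coeff_mult)

lemma coeff_term1: "coeff ([:x1,y1:]^a * [:x2,y2:]^b * [:x3::'a::comm_ring_1,y3:]^c) 1 =
  of_nat a * x1^(a-1) * y1 * x2^b * x3^c + x1^a * of_nat b * x2^(b-1) * y2 * x3^c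
      + x1^a * x2^b * of_nat c * x3^(c-1) * y3"
  by (simp only: coeff_mult1 coeff_mult0 coeff_lin_pow0 coeff_lin_pow1) (simp add: algebra_simps)

definition Dd :: "'a::comm_ring_1 form \<Rightarrow> 'a^3 \<Rightarrow> 'a^3 \<Rightarrow> 'a" where
  "Dd F v u = u$1 * fev 3 (fdx F) v + u$2 * fev 3 (fdy F) v + u$3 * fev 3 (fdz F) v"

lemma coeff_lp1: "coeff (lp 4 F v u) 1 = Dd F v u"
proof -
  have "coeff (lp 4 F v u) 1 = (\<Sum>(a,b,c)\<in>monoms 4. F a b c *
     (of_nat a * v$1^(a-1) * u$1 * v$2^b * v$3^c + v$1^a * of_nat b * v$2^(b-1) * u$2 * v$3^c
      + v$1^a * v$2^b * of_nat c * v$3^(c-1) * u$3))"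
    unfolding lp_def coeff_sum by (intro sum.cong refl) (simp add: split_def coeff_term1[unfolded One_nat_def])
  also have "\<dots> = Dd F v u"
    unfolding Dd_def fev_def fdx_def fdy_def fdz_def monoms4 monoms3
    by (simp add: algebra_simps eval_nat_numeral)
  finally show ?thesis .
qed

lemma alg_closed_infinite: "infinite (UNIV :: 'a::alg_closed_field set)"
proof
  assume fin: "finite (UNIV::'a set)"
  let ?P = "(\<Prod>a\<in>(UNIV::'a set). [:-a,1:])"
  have dP: "degree ?P = card (UNIV::'a set)" by (subst degree_prod_sum_eq) auto
  have "card (UNIV::'a set) > 0" using fin by (simp add: card_gt_0_iff)
  hence "degree (?P + 1) > 0" using dP by (subst degree_add_eq_left) auto
  then obtain x where x: "poly (?P + 1) x = 0" using alg_closed_imp_poly_has_root by blast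
  have "poly ?P x = 0" using fin by (simp add: poly_prod prod_zero_iff)
  with x show False by simp
qed

lemma poly_zero_if_all: 
  fixes P :: "'a::alg_closed_field poly"
  assumes "\<And>t. t \<noteq> 0 \<Longrightarrow> poly P t = 0" shows "P = 0"
proof (rule ccontr)
  assume "P \<noteq> 0"
  hence "finite {t. poly P t = 0}" by (rule poly_roots_finite)
  moreover have "{t. t \<noteq> 0} \<subseteq> {t. poly P t = 0}" using assms by auto
  ultimately have "finite {t::'a. t \<noteq> 0}" by (rule finite_subset[rotated])
  hence "finite (insert 0 {t::'a. t \<noteq> 0})" by simp
  moreover have "insert 0 {t::'a. t \<noteq> 0} = UNIV" by auto
  ultimately show False using alg_closed_infinite[where 'a='a] by simp
qed

lemma fev_smul:
  fixes G :: "'a::comm_ring_1 form"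
  shows "fev d G (c *s v) = c^d * fev d G v"
  unfolding fev_def sum_distrib_left
proof (intro sum.cong refl)
  fix x assume "x \<in> monoms d"
  then obtain a b e where x: "x = (a,b,e)" "d = a + b + e" unfolding monoms_def by auto
  show "(case x of (a, b, ca) \<Rightarrow> G a b ca * (c *s v) $ 1 ^ a * (c *s v) $ 2 ^ b * (c *s v) $ 3 ^ ca) =
         c ^ d * (case x of (a, b, c) \<Rightarrow> G a b c * v $ 1 ^ a * v $ 2 ^ b * v $ 3 ^ c)"
    unfolding x by (simp add: power_mult_distrib power_add mult_ac)
qed

lemma cubic_root:
  fixes G :: "'a::alg_closed_field form"
  assumes indep: "\<forall>a b. a *s p + b *s r = 0 \<longrightarrow> a = 0 \<and> b = 0"
  shows "\<exists>x. x \<noteq> 0 \<and> (\<exists>a b. x = a *s p + b *s r) \<and> fev 3 G x = 0"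
proof -
  let ?S = "lp 3 G p r"
  have pS: "poly ?S s = fev 3 G (p + s *s r)" for s by (rule poly_lp)
  have ne: "p + s *s r \<noteq> 0" for s using indep[rule_format, of 1 s] by auto
  have ne2: "r + t *s p \<noteq> 0" for t using indep[rule_format, of t 1] by (auto simp: add.commute)
  show ?thesis
  proof (cases "degree ?S > 0")
    case True then obtain s where "poly ?S s = 0" using alg_closed_imp_poly_has_root by blast
    moreover have "p + s *s r = 1 *s p + s *s r" by simp
    ultimately show ?thesis using ne pS by metis
  next
    case False then have "degree ?S = 0" by simp
    then obtain c where Sc: "?S = [:c:]" by (elim degree_eq_zeroE)
    then have Gc: "fev 3 G (p + s *s r) = c" for s using pS[of s] by simp
    let ?R = "lp 3 G r p"
    have R1: "poly (?R - monom c 3) t = 0" if "t \<noteq> 0" for t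
    proof -
      have eq: "r + t *s p = t *s (p + inverse t *s r)" using that
        by (simp add: vec_eq_iff algebra_simps)
      have "poly ?R t = fev 3 G (t *s (p + inverse t *s r))" by (simp only: poly_lp eq)
      hence "poly ?R t = t^3 * fev 3 G (p + inverse t *s r)" by (simp only: fev_smul)
      thus ?thesis using Gc by (simp add: poly_monom)
    qed
    have "?R - monom c 3 = 0" by (rule poly_zero_if_all) (use R1 in blast)
    hence "?R = monom c 3" by simp
    hence "fev 3 G r = 0" using poly_lp[of 3 G r p 0] by (simp add: poly_monom)
    moreover have "r = 0 *s p + 1 *s r" by simp
    moreover have "r \<noteq> 0" using ne2[of 0] by simp
    ultimately show ?thesis by blast
  qed
qed

lemma lf_add: "lf w (x + y) = lf w x + lf w y" by (simp add: lf_def algebra_simps)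
lemma lf_diff: "lf w (x - y) = lf w x - lf w y" for w :: "'a::comm_ring_1^3" by (simp add: lf_def algebra_simps)
lemma lf_smul: "lf w (c *s x) = c * lf w x" by (simp add: lf_def algebra_simps)
lemma lf_zero: "lf w 0 = 0" by (simp add: lf_def)

lemma basis_exists:
  fixes w :: "'a::field^3" assumes "w \<noteq> 0"
  shows "\<exists>p r u0. lf w p = 0 \<and> lf w r = 0 \<and> (\<forall>a b. a *s p + b *s r = 0 \<longrightarrow> a = 0 \<and> b = 0) \<and> lf w u0 \<noteq> 0"
proof -
  from assms have "w$1 \<noteq> 0 \<or> w$2 \<noteq> 0 \<or> w$3 \<noteq> 0" by (simp add: vec_eq_iff forall_3)
  then consider (1) "w$1 \<noteq> 0" | (2) "w$2 \<noteq> 0" | (3) "w$3 \<noteq> 0" by blast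
  then show ?thesis
  proof cases
    case 1
    let ?p = "vector [w$2, -w$1, 0] :: 'a^3" and ?r = "vector [w$3, 0, -w$1] :: 'a^3"
    have "\<forall>a b. a *s ?p + b *s ?r = 0 \<longrightarrow> a = 0 \<and> b = 0"
    proof (intro allI impI)
      fix a b assume h: "a *s ?p + b *s ?r = 0"
      have "(a *s ?p + b *s ?r)$2 = 0" "(a *s ?p + b *s ?r)$3 = 0" using h by simp_all
      thus "a = 0 \<and> b = 0" using 1 by simp
    qed
    moreover have "lf w ?p = 0" "lf w ?r = 0" "lf w (vector [1,0,0]) \<noteq> 0"
      using 1 by (simp_all add: lf_def algebra_simps)
    ultimately show ?thesis by blast
  next
    case 2
    let ?p = "vector [-w$2, w$1, 0] :: 'a^3" and ?r = "vector [0, w$3, -w$2] :: 'a^3"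
    have "\<forall>a b. a *s ?p + b *s ?r = 0 \<longrightarrow> a = 0 \<and> b = 0"
    proof (intro allI impI)
      fix a b assume h: "a *s ?p + b *s ?r = 0"
      have "(a *s ?p + b *s ?r)$1 = 0" "(a *s ?p + b *s ?r)$3 = 0" using h by simp_all
      thus "a = 0 \<and> b = 0" using 2 by simp
    qed
    moreover have "lf w ?p = 0" "lf w ?r = 0" "lf w (vector [0,1,0]) \<noteq> 0"
      using 2 by (simp_all add: lf_def algebra_simps)
    ultimately show ?thesis by blast
  next
    case 3
    let ?p = "vector [-w$3, 0, w$1] :: 'a^3" and ?r = "vector [0, -w$3, w$2] :: 'a^3"
    have "\<forall>a b. a *s ?p + b *s ?r = 0 \<longrightarrow> a = 0 \<and> b = 0"
    proof (intro allI impI)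
      fix a b assume h: "a *s ?p + b *s ?r = 0"
      have "(a *s ?p + b *s ?r)$1 = 0" "(a *s ?p + b *s ?r)$2 = 0" using h by simp_all
      thus "a = 0 \<and> b = 0" using 3 by simp
    qed
    moreover have "lf w ?p = 0" "lf w ?r = 0" "lf w (vector [0,0,1]) \<noteq> 0"
      using 3 by (simp_all add: lf_def algebra_simps)
    ultimately show ?thesis by blast
  qed
qed

lemma no_line:
  fixes F :: "'a::alg_closed_field form"
  assumes ns: "nonsingular_quartic F" and w: "w \<noteq> 0"
  shows "\<exists>v. lf w v = 0 \<and> fev 4 F v \<noteq> 0"
proof (rule ccontr)
  assume "\<not> ?thesis" hence van: "\<And>v. lf w v = 0 \<Longrightarrow> fev 4 F v = 0" by blast
  obtain p r u0 where pr: "lf w p = 0" "lf w r = 0" "\<forall>a b. a *s p + b *s r = 0 \<longrightarrow> a = 0 \<and> b = 0"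
    and u0: "lf w u0 \<noteq> 0" using basis_exists[OF w] by blast
  have D0: "Dd F v u = 0" if "lf w v = 0" "lf w u = 0" for v u
  proof -
    have "lp 4 F v u = 0" by (rule poly_zero_if_all) (simp add: poly_lp van lf_add lf_smul that)
    thus ?thesis using coeff_lp1[of F v u] by simp
  qed
  define Gu where "Gu = fadd (fadd (fscale (u0$1) (fdx F)) (fscale (u0$2) (fdy F))) (fscale (u0$3) (fdz F))"
  have Gu: "fev 3 Gu x = Dd F x u0" for x by (simp add: Gu_def fev_fadd fev_fscale Dd_def)
  obtain v0 where v0: "v0 \<noteq> 0" "\<exists>a b. v0 = a *s p + b *s r" "fev 3 Gu v0 = 0"
    using cubic_root[OF pr(3)] by blast
  have lv0: "lf w v0 = 0" using v0(2) pr by (auto simp: lf_add lf_smul)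
  have Dall: "Dd F v0 e = 0" for e
  proof -
    define \<alpha> where "\<alpha> = lf w e / lf w u0"
    have "lf w (e - \<alpha> *s u0) = 0" using u0 by (simp add: lf_diff lf_smul \<alpha>_def)
    hence "Dd F v0 (e - \<alpha> *s u0) = 0" by (rule D0[OF lv0])
    moreover have "Dd F v0 e = Dd F v0 (e - \<alpha> *s u0) + \<alpha> * Dd F v0 u0" by (simp add: Dd_def algebra_simps)
    ultimately show ?thesis using v0 Gu by simp
  qed
  have "fev 3 (fdx F) v0 = 0" using Dall[of "vector [1,0,0]"] by (simp add: Dd_def)
  moreover have "fev 3 (fdy F) v0 = 0" using Dall[of "vector [0,1,0]"] by (simp add: Dd_def)
  moreover have "fev 3 (fdz F) v0 = 0" using Dall[of "vector [0,0,1]"] by (simp add: Dd_def)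
  moreover have "fev 4 F v0 = 0" using van lv0 by blast
  ultimately show False using ns v0(1) unfolding nonsingular_quartic_def by blast
qed

definition bcond :: "('a::field^3 \<Rightarrow> 'a) \<Rightarrow> 'a^3 \<Rightarrow> 'a^3 \<Rightarrow> bool" where
  "bcond f p r \<longleftrightarrow> (\<exists>c g0 g1 g2. c \<noteq> 0 \<and> (g0 \<noteq> 0 \<or> g1 \<noteq> 0 \<or> g2 \<noteq> 0) \<and>
         (\<forall>s t. f (s *s p + t *s r) = c * (g0 * s^2 + g1 * s * t + g2 * t^2)^2))"

definition blines :: "('a::field^3 \<Rightarrow> 'a) \<Rightarrow> ('a^3) set set" where
  "blines f = {L. \<exists>w. w \<noteq> 0 \<and> L = {v. lf w v = 0} \<and>
      (\<exists>p r. (\<forall>v. lf w v = 0 \<longleftrightarrow> (\<exists>s t. v = s *s p + t *s r)) \<and> bcond f p r)}"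

lemma bitangents_eq: "bitangents F = blines (fev 4 F)"
  unfolding bitangents_def bitangent_def blines_def bcond_def by blast

lemma mv_lin: "B *v (s *s p + t *s r) = s *s (B *v p) + t *s (B *v r)"
  for B :: "'a::comm_ring_1^3^3"
  by (simp add: vec_eq_iff matrix_vector_mult_def sum_3 algebra_simps)

lemma lf_transp: "lf w (A *v u) = lf (transpose A *v w) u"
  for A :: "'a::comm_ring_1^3^3"
  by (simp add: lf_def matrix_vector_mult_def transpose_def sum_3 algebra_simps)

lemma inv_props:
  fixes A :: "'a::field^3^3"
  assumes "invertible A"
  shows "A ** matrix_inv A = mat 1" "matrix_inv A ** A = mat 1"
proof -
  have "\<exists>A'. A ** A' = mat 1 \<and> A' ** A = mat 1" using assms unfolding invertible_def by blast
  hence "A ** matrix_inv A = mat 1 \<and> matrix_inv A ** A = mat 1"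
    unfolding matrix_inv_def by (rule someI_ex)
  thus "A ** matrix_inv A = mat 1" "matrix_inv A ** A = mat 1" by auto
qed

lemma mv_cancel: "A ** B = mat 1 \<Longrightarrow> A *v (B *v x) = x"
  by (simp add: matrix_vector_mul_assoc)

lemma transp_nz:
  fixes A B :: "'a::field^3^3"
  assumes "A ** B = mat 1" "w \<noteq> 0"
  shows "transpose A *v w \<noteq> 0"
proof
  assume h: "transpose A *v w = 0"
  have "transpose B ** transpose A = mat 1" using assms(1)
    by (metis matrix_transpose_mul transpose_mat)
  hence "transpose B *v (transpose A *v w) = w" by (rule mv_cancel)
  with h assms(2) show False by simp
qed

lemma trans1:
  fixes A B :: "'a::field^3^3"
  assumes fh: "\<forall>u. f u = c * h (A *v u)" and c: "c \<noteq> 0" and AB: "A ** B = mat 1"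
    and BA: "B ** A = mat 1" and L: "L \<in> blines h"
  shows "(\<lambda>v. B *v v) ` L \<in> blines f"
proof -
  obtain w p r where w: "w \<noteq> 0" "L = {v. lf w v = 0}"
    and spn: "\<forall>v. lf w v = 0 \<longleftrightarrow> (\<exists>s t. v = s *s p + t *s r)" and bc: "bcond h p r"
    using L unfolding blines_def by blast
  let ?w = "transpose A *v w"
  have w0: "?w \<noteq> 0" by (rule transp_nz[OF AB w(1)])
  have img: "(\<lambda>v. B *v v) ` L = {u. lf ?w u = 0}"
  proof safe
    fix v assume "v \<in> L"
    have "lf ?w (B *v v) = lf w (A *v (B *v v))" by (rule lf_transp[symmetric])
    thus "lf ?w (B *v v) = 0" using w(2) mv_cancel[OF AB] \<open>v \<in> L\<close> by simp
  next
    fix u assume "lf ?w u = 0"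
    hence "A *v u \<in> L" using w(2) lf_transp[of w A u] by simp
    moreover have "u = B *v (A *v u)" using mv_cancel[OF BA] by simp
    ultimately show "u \<in> (\<lambda>v. B *v v) ` L" by blast
  qed
  have spn': "\<forall>u. lf ?w u = 0 \<longleftrightarrow> (\<exists>s t. u = s *s (B *v p) + t *s (B *v r))"
  proof
    fix u
    show "lf ?w u = 0 \<longleftrightarrow> (\<exists>s t. u = s *s (B *v p) + t *s (B *v r))"
    proof
      assume "lf ?w u = 0"
      hence "lf w (A *v u) = 0" using lf_transp[of w A u] by simp
      then obtain s t where "A *v u = s *s p + t *s r" using spn by blast
      hence "B *v (A *v u) = s *s (B *v p) + t *s (B *v r)" by (simp add: mv_lin)
      thus "\<exists>s t. u = s *s (B *v p) + t *s (B *v r)" using mv_cancel[OF BA] by metis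
    next
      assume "\<exists>s t. u = s *s (B *v p) + t *s (B *v r)"
      then obtain s t where "u = s *s (B *v p) + t *s (B *v r)" by blast
      hence "A *v u = s *s p + t *s r" using mv_cancel[OF AB] by (simp add: mv_lin)
      thus "lf ?w u = 0" using spn by (metis lf_transp)
    qed
  qed
  obtain c0 g0 g1 g2 where c0: "c0 \<noteq> 0" "g0 \<noteq> 0 \<or> g1 \<noteq> 0 \<or> g2 \<noteq> 0"
    and hq: "\<forall>s t. h (s *s p + t *s r) = c0 * (g0 * s^2 + g1 * s * t + g2 * t^2)^2"
    using bc unfolding bcond_def by blast
  have "\<forall>s t. f (s *s (B *v p) + t *s (B *v r)) = (c * c0) * (g0 * s^2 + g1 * s * t + g2 * t^2)^2"
  proof (intro allI)
    fix s t
    have "A *v (s *s (B *v p) + t *s (B *v r)) = s *s p + t *s r" using mv_cancel[OF AB] by (simp add: mv_lin)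
    thus "f (s *s (B *v p) + t *s (B *v r)) = (c * c0) * (g0 * s^2 + g1 * s * t + g2 * t^2)^2"
      using fh hq by simp
  qed
  hence "bcond f (B *v p) (B *v r)" unfolding bcond_def using c c0 by (metis mult_eq_0_iff)
  thus ?thesis unfolding blines_def using w0 img spn' by blast
qed

lemma transport:
  fixes A :: "'a::field^3^3"
  assumes fh: "\<forall>u. f u = c * h (A *v u)" and c: "c \<noteq> 0" and A: "invertible A"
  shows "blines f = (\<lambda>L. (\<lambda>v. matrix_inv A *v v) ` L) ` blines h"
proof
  note AB = inv_props(1)[OF A] and BA = inv_props(2)[OF A]
  show "(\<lambda>L. (\<lambda>v. matrix_inv A *v v) ` L) ` blines h \<subseteq> blines f"
    using trans1[OF fh c AB BA] by blast
  show "blines f \<subseteq> (\<lambda>L. (\<lambda>v. matrix_inv A *v v) ` L) ` blines h"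
  proof
    fix L assume L: "L \<in> blines f"
    have hf: "\<forall>u. h u = inverse c * f (matrix_inv A *v u)"
    proof
      fix u
      have "f (matrix_inv A *v u) = c * h (A *v (matrix_inv A *v u))" using fh by blast
      also have "A *v (matrix_inv A *v u) = u" by (rule mv_cancel[OF AB])
      finally show "h u = inverse c * f (matrix_inv A *v u)" using c by simp
    qed
    have "(\<lambda>v. A *v v) ` L \<in> blines h"
      by (rule trans1[OF hf _ BA AB L]) (use c in simp)
    moreover have "L = (\<lambda>v. matrix_inv A *v v) ` ((\<lambda>v. A *v v) ` L)"
      using mv_cancel[OF BA] by (simp add: image_image)
    ultimately show "L \<in> (\<lambda>L. (\<lambda>v. matrix_inv A *v v) ` L) ` blines h" by blast
  qed
qed

lemma nv_transport:
  fixes A :: "'a::field^3^3" and c :: 'a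
  assumes fh: "\<forall>u. f u = c * h (A *v u)" and A: "invertible A"
    and nv: "\<forall>w. w \<noteq> 0 \<longrightarrow> (\<exists>v. lf w v = 0 \<and> f v \<noteq> 0)"
  shows "\<forall>w. w \<noteq> 0 \<longrightarrow> (\<exists>v. lf w v = 0 \<and> h v \<noteq> 0)"
proof (intro allI impI)
  fix w :: "'a^3" assume "w \<noteq> 0"
  hence "transpose A *v w \<noteq> 0" using transp_nz inv_props(1)[OF A] by blast
  then obtain v where "lf (transpose A *v w) v = 0" "f v \<noteq> 0" using nv by blast
  note vv = this
  have "lf w (A *v v) = 0" using vv(1) lf_transp[of w A v] by simp
  moreover have "h (A *v v) \<noteq> 0"
  proof
    assume "h (A *v v) = 0"
    hence "f v = 0" using fh by simp
    thus False using vv(2) by simp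
  qed
  ultimately show "\<exists>v. lf w v = 0 \<and> h v \<noteq> 0" by blast
qed

lemma char2_neg: "(2::'a::comm_ring_1) = 0 \<Longrightarrow> - x = (x::'a)"
  by (metis add_eq_0_iff mult_2 mult_zero_left)

lemma char2_sq: "(2::'a::comm_ring_1) = 0 \<Longrightarrow> (a + b + e)^2 = a^2 + b^2 + (e::'a)^2"
proof -
  assume h: "(2::'a) = 0"
  have "(a + b + e)^2 = a^2 + b^2 + e^2 + 2 * (a*b + b*e + a*e)"
    by (simp add: power2_eq_square distrib_left distrib_right mult_2 ac_simps)
  thus ?thesis using h by simp
qed

lemma fev_FQ:
  fixes Q :: "'a::comm_ring_1 form"
  assumes "homog 2 Q"
  shows "fev 4 (FQ Q) v = (fev 2 Q v)^2 + fev 4 xyzw v"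
proof -
  have "fev (2+2) (fmul Q Q) v = fev 2 Q v * fev 2 Q v" by (rule fev_fmul[OF assms assms])
  thus ?thesis unfolding FQ_def fev_fadd by (simp add: power2_eq_square)
qed

lemma quad_restr:
  fixes Q :: "'a::comm_ring_1 form"
  shows "fev 2 Q (s *s p + t *s r) = fev 2 Q p * s^2 + (fev 2 Q (p + r) - fev 2 Q p - fev 2 Q r) * s * t
     + fev 2 Q r * t^2"
  unfolding fev_def monoms2 by (simp add: algebra_simps power2_eq_square)

lemma switch:
  fixes Q Q' :: "'a::alg_closed_field form"
  assumes char2: "(2::'a) = 0" and hQ: "homog 2 Q" and hQ': "homog 2 Q'"
    and bc: "bcond (fev 4 (FQ Q)) p r"
    and nz: "\<exists>s t. fev 4 (FQ Q') (s *s p + t *s r) \<noteq> 0"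
  shows "bcond (fev 4 (FQ Q')) p r"
proof -
  obtain c g0 g1 g2 where c: "c \<noteq> 0"
    and hq: "\<forall>s t. fev 4 (FQ Q) (s *s p + t *s r) = c * (g0 * s^2 + g1 * s * t + g2 * t^2)^2"
    using bc unfolding bcond_def by blast
  obtain d where d: "d^2 = c" using nth_root_exists[of 2 c] by auto
  define q0 where "q0 = fev 2 Q p" define q1 where "q1 = fev 2 Q (p + r) - fev 2 Q p - fev 2 Q r"
  define q2 where "q2 = fev 2 Q r"
  define q0' where "q0' = fev 2 Q' p" define q1' where "q1' = fev 2 Q' (p + r) - fev 2 Q' p - fev 2 Q' r"
  define q2' where "q2' = fev 2 Q' r"
  define h0 where "h0 = q0' + q0 + d * g0"
  define h1 where "h1 = q1' + q1 + d * g1"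
  define h2 where "h2 = q2' + q2 + d * g2"
  have key: "fev 4 (FQ Q') (s *s p + t *s r) = 1 * (h0 * s^2 + h1 * s * t + h2 * t^2)^2" for s t
  proof -
    let ?x = "s *s p + t *s r"
    let ?a = "q0' * s^2 + q1' * s * t + q2' * t^2" and ?b = "q0 * s^2 + q1 * s * t + q2 * t^2"
      and ?g = "g0 * s^2 + g1 * s * t + g2 * t^2"
    have Qa: "fev 2 Q' ?x = ?a" unfolding q0'_def q1'_def q2'_def by (rule quad_restr)
    have Qb: "fev 2 Q ?x = ?b" unfolding q0_def q1_def q2_def by (rule quad_restr)
    have X: "fev 4 xyzw ?x = c * ?g^2 - ?b^2" using hq fev_FQ[OF hQ, of ?x] Qb by simp
    have "fev 4 (FQ Q') ?x = ?a^2 + (c * ?g^2 - ?b^2)" using fev_FQ[OF hQ', of ?x] Qa X by simp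
    also have "\<dots> = ?a^2 + ?b^2 + (d * ?g)^2"
      using d char2_neg[OF char2, of "?b^2"] by (simp add: power_mult_distrib)
    also have "\<dots> = (?a + ?b + d * ?g)^2" by (rule char2_sq[OF char2, symmetric])
    also have "?a + ?b + d * ?g = h0 * s^2 + h1 * s * t + h2 * t^2"
      unfolding h0_def h1_def h2_def by (simp add: algebra_simps)
    finally show ?thesis by simp
  qed
  have "h0 \<noteq> 0 \<or> h1 \<noteq> 0 \<or> h2 \<noteq> 0"
  proof (rule ccontr)
    assume "\<not> ?thesis"
    hence "fev 4 (FQ Q') (s *s p + t *s r) = 0" for s t using key[of s t] by simp
    thus False using nz by blast
  qed
  thus ?thesis unfolding bcond_def using key by (metis one_neq_zero)
qed

lemma blines_sub:
  fixes Q Q' :: "'a::alg_closed_field form"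
  assumes char2: "(2::'a) = 0" and hQ: "homog 2 Q" and hQ': "homog 2 Q'"
    and nv: "\<forall>w. w \<noteq> 0 \<longrightarrow> (\<exists>v. lf w v = 0 \<and> fev 4 (FQ Q') v \<noteq> 0)"
  shows "blines (fev 4 (FQ Q)) \<subseteq> blines (fev 4 (FQ Q'))"
proof
  fix L assume "L \<in> blines (fev 4 (FQ Q))"
  then obtain w p r where w: "w \<noteq> 0" "L = {v. lf w v = 0}"
    and spn: "\<forall>v. lf w v = 0 \<longleftrightarrow> (\<exists>s t. v = s *s p + t *s r)" and bc: "bcond (fev 4 (FQ Q)) p r"
    unfolding blines_def by blast
  obtain v where "lf w v = 0" "fev 4 (FQ Q') v \<noteq> 0" using nv w by blast
  moreover obtain s t where "v = s *s p + t *s r" using spn \<open>lf w v = 0\<close> by blast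
  ultimately have "\<exists>s t. fev 4 (FQ Q') (s *s p + t *s r) \<noteq> 0" by blast
  hence "bcond (fev 4 (FQ Q')) p r" by (rule switch[OF char2 hQ hQ' bc])
  thus "L \<in> blines (fev 4 (FQ Q'))" unfolding blines_def using w spn by blast
qed

lemma frob_add:
  fixes a b :: "'a::comm_ring_1"
  assumes char2: "(2::'a) = 0"
  shows "(a + b)^(2^n) = a^(2^n) + b^(2^n)"
proof (induction n)
  case 0 then show ?case by simp
next
  case (Suc n)
  have sq: "(x + y)^2 = x^2 + y^2" for x y :: 'a
  proof -
    have "(x + y)^2 = x^2 + y^2 + 2 * (x*y)" by (simp add: power2_eq_square algebra_simps mult_2)
    thus ?thesis using char2 by simp
  qed
  have "(a + b)^(2^Suc n) = ((a + b)^(2^n))^2" by (simp add: power_mult[symmetric] mult.commute)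
  also have "\<dots> = (a^(2^n))^2 + (b^(2^n))^2" using Suc sq by simp
  also have "\<dots> = a^(2^Suc n) + b^(2^Suc n)" by (simp add: power_mult[symmetric] mult.commute)
  finally show ?case .
qed

lemma msig_mult:
  fixes X Y :: "'a::comm_ring_1^3^3"
  assumes char2: "(2::'a) = 0"
  shows "msig (2^n) (X ** Y) = msig (2^n) X ** msig (2^n) Y"
  by (simp add: vec_eq_iff msig_def matrix_matrix_mult_def sum_3 frob_add[OF char2] power_mult_distrib)

lemma msig_mat1: "q > 0 \<Longrightarrow> msig q (mat 1 :: 'a::comm_ring_1^3^3) = mat 1"
  by (simp add: vec_eq_iff msig_def mat_def power_0_left)

lemma msig_smat: "msig q (smat c X) = smat (c^q) (msig q X)"
  by (simp add: vec_eq_iff msig_def smat_def power_mult_distrib)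

lemma smat_mult_left: "smat c X ** Y = smat c (X ** Y)" for X Y :: "'a::comm_ring_1^3^3"
  by (simp add: vec_eq_iff smat_def matrix_matrix_mult_def sum_distrib_left mult_ac)
lemma smat_mult_right: "X ** smat c Y = smat c (X ** Y)" for X Y :: "'a::comm_ring_1^3^3"
  by (simp add: vec_eq_iff smat_def matrix_matrix_mult_def sum_distrib_left mult_ac)
lemma smat_smat: "smat a (smat b X) = smat (a*b) X" for X :: "'a::comm_ring_1^3^3" by (simp add: vec_eq_iff smat_def mult_ac)
lemma smat_1: "smat 1 X = X" for X :: "'a::comm_ring_1^3^3" by (simp add: vec_eq_iff smat_def)
lemma smat_mv: "smat c X *v v = c *s (X *v v)" for X :: "'a::comm_ring_1^3^3"
  by (simp add: vec_eq_iff smat_def matrix_vector_mult_def sum_distrib_left mult_ac)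
lemma mv_smul: "X *v (c *s v) = c *s (X *v v)" for X :: "'a::comm_ring_1^3^3"
  by (simp add: vec_eq_iff matrix_vector_mult_def sum_distrib_left mult_ac)

lemma eta_exists:
  fixes M M' G :: "'a::alg_closed_field^3^3"
  assumes char2: "(2::'a) = 0" and n: "n \<ge> 1"
    and M: "invertible M" and M': "invertible M'"
    and coc: "\<mu> \<noteq> 0" "msig (2^n) M ** matrix_inv M = smat \<mu> G"
    and coc': "\<mu>' \<noteq> 0" "msig (2^n) M' ** matrix_inv M' = smat \<mu>' G"
  shows "\<exists>lm. lm \<noteq> 0 \<and> msig (2^n) (smat lm (matrix_inv M' ** M)) = smat lm (matrix_inv M' ** M)"
proof -
  let ?q = "2^n :: nat"
  let ?s = "msig ?q"
  note MA = inv_props[OF M] and MA' = inv_props[OF M']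
  have sM: "?s M = smat \<mu> (G ** M)"
  proof -
    have "?s M = ?s M ** (matrix_inv M ** M)" using MA by simp
    also have "\<dots> = smat \<mu> G ** M" by (simp add: matrix_mul_assoc coc(2))
    finally show ?thesis by (simp add: smat_mult_left)
  qed
  have sM': "?s M' = smat \<mu>' (G ** M')"
  proof -
    have "?s M' = ?s M' ** (matrix_inv M' ** M')" using MA' by simp
    also have "\<dots> = smat \<mu>' G ** M'" by (simp add: matrix_mul_assoc coc'(2))
    finally show ?thesis by (simp add: smat_mult_left)
  qed
  have "?s (matrix_inv M') ** ?s M' = ?s (matrix_inv M' ** M')" by (rule msig_mult[OF char2, symmetric])
  also have "\<dots> = ?s (mat 1)" using MA'(2) by simp
  also have "\<dots> = mat 1" by (rule msig_mat1) simp
  finally have "?s (matrix_inv M') ** ?s M' = mat 1" .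
  hence "smat \<mu>' (?s (matrix_inv M') ** G ** M') = mat 1"
    by (simp add: sM' smat_mult_right matrix_mul_assoc)
  hence "smat \<mu>' (?s (matrix_inv M') ** G ** M') ** matrix_inv M' = matrix_inv M'" by simp
  hence "smat \<mu>' (?s (matrix_inv M') ** G) = matrix_inv M'"
    by (simp add: smat_mult_left MA'(1) flip: matrix_mul_assoc)
  hence sG: "?s (matrix_inv M') ** G = smat (inverse \<mu>') (matrix_inv M')"
    using coc'(1) by (metis smat_smat smat_1 left_inverse)
  define N where "N = matrix_inv M' ** M"
  have sN: "?s N = smat (\<mu> * inverse \<mu>') N"
  proof -
    have "?s N = ?s (matrix_inv M') ** smat \<mu> (G ** M)" unfolding N_def by (simp add: msig_mult[OF char2] sM)
    also have "\<dots> = smat \<mu> ((?s (matrix_inv M') ** G) ** M)" by (simp add: smat_mult_right matrix_mul_assoc)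
    also have "\<dots> = smat (\<mu> * inverse \<mu>') N" by (simp add: sG smat_mult_left smat_smat N_def)
    finally show ?thesis .
  qed
  have "(2::nat)^1 \<le> 2^n" using n by (rule power_increasing) simp
  hence q1: "?q - 1 > 0" by simp
  obtain lm where lam: "lm^(?q - 1) = \<mu>' * inverse \<mu>" using nth_root_exists[OF q1] by blast
  have l0: "lm \<noteq> 0" using lam coc(1) coc'(1) q1 by (metis inverse_nonzero_iff_nonzero mult_eq_0_iff zero_power)
  have "lm^?q = lm * lm^(?q - 1)" using q1 by (metis Suc_diff_1 gr0I not_less0 power_Suc zero_less_diff)
  hence lq: "lm^?q * (\<mu> * inverse \<mu>') = lm" using lam coc(1) coc'(1) by (simp add: field_simps)
  have "?s (smat lm N) = smat lm N" by (simp add: msig_smat sN smat_smat lq)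
  thus ?thesis using l0 unfolding N_def by blast
qed

lemma scale_line:
  fixes lm :: "'a::field"
  assumes "lm \<noteq> 0"
  shows "(\<lambda>v. lm *s v) ` {v. lf w v = 0} = {v. lf w v = 0}"
proof safe
  fix v assume "lf w v = 0"
  thus "lf w (lm *s v) = 0" by (simp add: lf_smul)
  have "v = lm *s (inverse lm *s v)" using assms by simp
  moreover have "lf w (inverse lm *s v) = 0" using \<open>lf w v = 0\<close> by (simp add: lf_smul)
  ultimately show "v \<in> (\<lambda>v. lm *s v) ` {v. lf w v = 0}" by blast
qed

theorem lemma1p4:
  fixes n :: nat
    and G M M' :: "'K::alg_closed_field ^ 3 ^ 3"
    and F F' Q Q' :: "'K form"
  assumes char2: "(2::'K) = 0"
    and algebraic: "\<forall>a::'K. \<exists>m>0. a ^ (2 ^ m) = a"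
    and n_pos: "n \<ge> 1"
    and G_Gamma: "G \<in> Gamma"
    and F_quartic: "nonsingular_quartic F" and F_k: "\<forall>i j l. F i j l \<in> kfield (2 ^ n)"
    and F'_quartic: "nonsingular_quartic F'" and F'_k: "\<forall>i j l. F' i j l \<in> kfield (2 ^ n)"
    and Q_D: "Q \<in> Dset (2 ^ n) G" and Q'_D: "Q' \<in> Dset (2 ^ n) G"
    and phi: "iso_by F (FQ Q) M" and phi': "iso_by F' (FQ Q') M'"
    and cocycle: "\<exists>\<mu>. \<mu> \<noteq> 0 \<and> msig (2 ^ n) M ** matrix_inv M = smat \<mu> G"
    and cocycle': "\<exists>\<mu>. \<mu> \<noteq> 0 \<and> msig (2 ^ n) M' ** matrix_inv M' = smat \<mu> G"
  shows "\<exists>\<eta>::'K ^ 3 ^ 3. invertible \<eta> \<and> (\<forall>i j. \<eta> $ i $ j \<in> kfield (2 ^ n)) \<and>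
           (\<lambda>L. (\<lambda>v. \<eta> *v v) ` L) ` bitangents F = bitangents F'"
proof -
  have hQ: "homog 2 Q" using Q_D unfolding Dset_def Qset_def by auto
  have hQ': "homog 2 Q'" using Q'_D unfolding Dset_def Qset_def by auto
  obtain c where M: "invertible M" "c \<noteq> 0" "F = fscale c (fsubst 4 (FQ Q) M)"
    using phi unfolding iso_by_def by blast
  obtain c' where M': "invertible M'" "c' \<noteq> 0" "F' = fscale c' (fsubst 4 (FQ Q') M')"
    using phi' unfolding iso_by_def by blast
  have fF: "\<forall>u. fev 4 F u = c * fev 4 (FQ Q) (M *v u)" by (simp add: M(3) fev_fscale fev_fsubst)
  have fF': "\<forall>u. fev 4 F' u = c' * fev 4 (FQ Q') (M' *v u)" by (simp add: M'(3) fev_fscale fev_fsubst)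
  have BF: "bitangents F = (\<lambda>L. (\<lambda>v. matrix_inv M *v v) ` L) ` blines (fev 4 (FQ Q))"
    unfolding bitangents_eq by (rule transport[OF fF M(2) M(1)])
  have BF': "bitangents F' = (\<lambda>L. (\<lambda>v. matrix_inv M' *v v) ` L) ` blines (fev 4 (FQ Q'))"
    unfolding bitangents_eq by (rule transport[OF fF' M'(2) M'(1)])
  have nvQ: "\<forall>w. w \<noteq> 0 \<longrightarrow> (\<exists>v. lf w v = 0 \<and> fev 4 (FQ Q) v \<noteq> 0)"
    by (rule nv_transport[OF fF M(1)]) (use no_line[OF F_quartic] in blast)
  have nvQ': "\<forall>w. w \<noteq> 0 \<longrightarrow> (\<exists>v. lf w v = 0 \<and> fev 4 (FQ Q') v \<noteq> 0)"
    by (rule nv_transport[OF fF' M'(1)]) (use no_line[OF F'_quartic] in blast)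
  have B0: "blines (fev 4 (FQ Q)) = blines (fev 4 (FQ Q'))"
    using blines_sub[OF char2 hQ hQ' nvQ'] blines_sub[OF char2 hQ' hQ nvQ] by blast
  obtain \<mu> where mu: "\<mu> \<noteq> 0" "msig (2 ^ n) M ** matrix_inv M = smat \<mu> G" using cocycle by blast
  obtain \<mu>' where mu': "\<mu>' \<noteq> 0" "msig (2 ^ n) M' ** matrix_inv M' = smat \<mu>' G" using cocycle' by blast
  obtain lm where lm: "lm \<noteq> 0" "msig (2^n) (smat lm (matrix_inv M' ** M)) = smat lm (matrix_inv M' ** M)"
    using eta_exists[OF char2 n_pos M(1) M'(1) mu mu'] by blast
  define \<eta> where "\<eta> = smat lm (matrix_inv M' ** M)"
  note MA = inv_props[OF M(1)] and MA' = inv_props[OF M'(1)]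
  have "invertible \<eta>"
  proof -
    let ?X = "smat (inverse lm) (matrix_inv M ** M')"
    have "(matrix_inv M' ** M) ** (matrix_inv M ** M') = mat 1"
      by (metis MA(1) MA'(2) matrix_mul_assoc matrix_mul_rid)
    hence 1: "\<eta> ** ?X = mat 1" using lm(1)
      by (simp add: \<eta>_def smat_mult_left smat_mult_right smat_smat smat_1)
    have "(matrix_inv M ** M') ** (matrix_inv M' ** M) = mat 1"
      by (metis MA(2) MA'(1) matrix_mul_assoc matrix_mul_rid)
    hence 2: "?X ** \<eta> = mat 1" using lm(1)
      by (simp add: \<eta>_def smat_mult_left smat_mult_right smat_smat smat_1)
    show ?thesis unfolding invertible_def using 1 2 by blast
  qed
  moreover have "\<forall>i j. \<eta> $ i $ j \<in> kfield (2 ^ n)"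
  proof (intro allI)
    fix i j
    have "msig (2^n) \<eta> $ i $ j = \<eta> $ i $ j" using lm(2) unfolding \<eta>_def by simp
    thus "\<eta> $ i $ j \<in> kfield (2 ^ n)" unfolding kfield_def msig_def by simp
  qed
  moreover have "(\<lambda>L. (\<lambda>v. \<eta> *v v) ` L) ` bitangents F = bitangents F'"
  proof -
    let ?B = "blines (fev 4 (FQ Q'))"
    have step: "(\<lambda>v. \<eta> *v v) ` ((\<lambda>v. matrix_inv M *v v) ` L) = (\<lambda>v. matrix_inv M' *v v) ` L"
      if LB: "L \<in> ?B" for L
    proof -
      obtain w where L: "L = {v. lf w v = 0}" using LB unfolding blines_def by blast
      have ev: "\<eta> *v (matrix_inv M *v v) = matrix_inv M' *v (lm *s v)" for v
      proof -
        have "\<eta> *v (matrix_inv M *v v) = lm *s (matrix_inv M' *v (M *v (matrix_inv M *v v)))"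
          unfolding \<eta>_def smat_mv by (simp only: matrix_vector_mul_assoc matrix_mul_assoc)
        also have "\<dots> = lm *s (matrix_inv M' *v v)" using mv_cancel[OF MA(1)] by simp
        finally show ?thesis by (simp add: mv_smul)
      qed
      have "(\<lambda>v. \<eta> *v v) ` ((\<lambda>v. matrix_inv M *v v) ` L) = (\<lambda>v. matrix_inv M' *v v) ` ((\<lambda>v. lm *s v) ` L)"
        by (simp add: image_image ev)
      also have "(\<lambda>v. lm *s v) ` L = L" unfolding L by (rule scale_line[OF lm(1)])
      finally show ?thesis .
    qed
    have "(\<lambda>L. (\<lambda>v. \<eta> *v v) ` L) ` bitangents F =
        (\<lambda>L. (\<lambda>v. \<eta> *v v) ` L) ` ((\<lambda>L. (\<lambda>v. matrix_inv M *v v) ` L) ` ?B)"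
      using BF B0 by simp
    also have "\<dots> = (\<lambda>L. (\<lambda>v. \<eta> *v v) ` ((\<lambda>v. matrix_inv M *v v) ` L)) ` ?B"
      by (rule image_image)
    also have "\<dots> = (\<lambda>L. (\<lambda>v. matrix_inv M' *v v) ` L) ` ?B"
      by (rule image_cong[OF refl]) (rule step)
    also have "\<dots> = bitangents F'" using BF' by simp
    finally show ?thesis .
  qed
  ultimately show ?thesis by blast
qed

end
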